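(* Let $(M,\diamond,\bullet,\alpha_M)$ be a module over the multiplicative Hom-post-Lie algebra $(L,[\cdot,\cdot],\cdot,\alpha)$ and let $n$ be a non-negative integer. Define $\diamond^{n,0},\bullet^{n,0}:L\otimes M\to M$ by $x\diamond^{n,0}m=\alpha^n(x)\diamond m$ and $x\bullet^{n,0}m=\alpha^n(x)\bullet m$. Then $(M,\diamond^{n,0},\bullet^{n,0},\alpha_M)$ is a module over $L$.
   Context: All vector spaces are over a field $\mathbb{K}$ of characteristic $\neq 2$. A Hom-Lie algebra is $(L,[\cdot,\cdot],\alpha)$ with $[\cdot,\cdot]$ bilinear skew-symmetric, $\alpha$ linear, and $[\alpha(x),[y,z]]+[\alpha(y),[z,x]]+[\alpha(z),[x,y]]=0$. A Hom-post-Lie algebra $(L,[\cdot,\cdot],\cdot,\alpha)$ is a Hom-Lie algebra with bilinear $\cdot$ such that $\alpha(z)\cdot[x,y]-[z\cdot x,\alpha(y)]-[\alpha(x),z\cdot y]=0$ and $\alpha(z)\cdot(y\cdot x)-\alpha(y)\cdot(z\cdot x)+(y\cdot z)\cdot\alpha(x)-(z\cdot y)\cdot\alpha(x)+[y,z]\cdot\alpha(x)=0$ for all $x,y,z$; it is multiplicative if $\alpha([x,y])=[\alpha(x),\alpha(y)]$ and $\alpha(x\cdot y)=\alpha(x)\cdot\alpha(y)$. A module over $L$ is a vector space $M$ with linear $\alpha_M$ and bilinear $\diamond,\bullet:L\otimes M\to M$ such that for all $x,y\in L,m\in M$: (i) $\alpha_M(x\diamond m)=\alpha(x)\diamond\alpha_M(m)$,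 $\alpha_M(x\bullet m)=\alpha(x)\bullet\alpha_M(m)$; (ii) $[x,y]\diamond\alpha_M(m)=\alpha(x)\diamond(y\diamond m)-\alpha(y)\diamond(x\diamond m)$; (iii) $(x\cdot y)\diamond\alpha_M(m)=\alpha(x)\bullet(y\diamond m)-\alpha(y)\diamond(x\bullet m)$; (iv) $[x,y]\bullet\alpha_M(m)=\alpha(x)\bullet(y\bullet m)-\alpha(y)\bullet(x\bullet m)-(x\cdot y)\bullet\alpha_M(m)+(y\cdot x)\bullet\alpha_M(m)$. *)

theory Defs
  imports Main "HOL.Vector_Spaces"
begin

definition bilinear_map ::
  "('k::field \<Rightarrow> 'a::ab_group_add \<Rightarrow> 'a) \<Rightarrow> ('k \<Rightarrow> 'b::ab_group_add \<Rightarrow> 'b) \<Rightarrow>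
   ('k \<Rightarrow> 'c::ab_group_add \<Rightarrow> 'c) \<Rightarrow> ('a \<Rightarrow> 'b \<Rightarrow> 'c) \<Rightarrow> bool" where
  "bilinear_map sa sb sc f \<longleftrightarrow>
     (\<forall>y. Vector_Spaces.linear sa sc (\<lambda>x. f x y)) \<and>
     (\<forall>x. Vector_Spaces.linear sb sc (\<lambda>y. f x y))"

definition HomLie ::
  "('k::field \<Rightarrow> 'l::ab_group_add \<Rightarrow> 'l) \<Rightarrow> ('l \<Rightarrow> 'l \<Rightarrow> 'l) \<Rightarrow> ('l \<Rightarrow> 'l) \<Rightarrow> bool" where
  "HomLie s br \<alpha> \<longleftrightarrow>
     vector_space s \<and> bilinear_map s s s br \<and> Vector_Spaces.linear s s \<alpha> \<and>
     (\<forall>x y. br x y = - br y x) \<and>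
     (\<forall>x y z. br (\<alpha> x) (br y z) + br (\<alpha> y) (br z x) + br (\<alpha> z) (br x y) = 0)"

definition HomPostLie ::
  "('k::field \<Rightarrow> 'l::ab_group_add \<Rightarrow> 'l) \<Rightarrow> ('l \<Rightarrow> 'l \<Rightarrow> 'l) \<Rightarrow> ('l \<Rightarrow> 'l \<Rightarrow> 'l)
    \<Rightarrow> ('l \<Rightarrow> 'l) \<Rightarrow> bool" where
  "HomPostLie s br dot \<alpha> \<longleftrightarrow>
     HomLie s br \<alpha> \<and> bilinear_map s s s dot \<and>
     (\<forall>x y z. dot (\<alpha> z) (br x y) - br (dot z x) (\<alpha> y) - br (\<alpha> x) (dot z y) = 0) \<and>
     (\<forall>x y z. dot (\<alpha> z) (dot y x) - dot (\<alpha> y) (dot z x) + dot (dot y z) (\<alpha> x)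
               - dot (dot z y) (\<alpha> x) + dot (br y z) (\<alpha> x) = 0)"

definition MultHomPostLie ::
  "('k::field \<Rightarrow> 'l::ab_group_add \<Rightarrow> 'l) \<Rightarrow> ('l \<Rightarrow> 'l \<Rightarrow> 'l) \<Rightarrow> ('l \<Rightarrow> 'l \<Rightarrow> 'l)
    \<Rightarrow> ('l \<Rightarrow> 'l) \<Rightarrow> bool" where
  "MultHomPostLie s br dot \<alpha> \<longleftrightarrow>
     HomPostLie s br dot \<alpha> \<and>
     (\<forall>x y. \<alpha> (br x y) = br (\<alpha> x) (\<alpha> y)) \<and>
     (\<forall>x y. \<alpha> (dot x y) = dot (\<alpha> x) (\<alpha> y))"

definition HomPostLieModule ::
  "('k::field \<Rightarrow> 'l::ab_group_add \<Rightarrow> 'l) \<Rightarrow> ('l \<Rightarrow> 'l \<Rightarrow> 'l) \<Rightarrow> ('l \<Rightarrow> 'l \<Rightarrow> 'l)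
    \<Rightarrow> ('l \<Rightarrow> 'l) \<Rightarrow> ('k \<Rightarrow> 'm::ab_group_add \<Rightarrow> 'm)
    \<Rightarrow> ('l \<Rightarrow> 'm \<Rightarrow> 'm) \<Rightarrow> ('l \<Rightarrow> 'm \<Rightarrow> 'm) \<Rightarrow> ('m \<Rightarrow> 'm) \<Rightarrow> bool" where
  "HomPostLieModule s br dot \<alpha> sM dia bul \<alpha>M \<longleftrightarrow>
     vector_space sM \<and> Vector_Spaces.linear sM sM \<alpha>M \<and>
     bilinear_map s sM sM dia \<and> bilinear_map s sM sM bul \<and>
     (\<forall>x m. \<alpha>M (dia x m) = dia (\<alpha> x) (\<alpha>M m)) \<and>
     (\<forall>x m. \<alpha>M (bul x m) = bul (\<alpha> x) (\<alpha>M m)) \<and>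
     (\<forall>x y m. dia (br x y) (\<alpha>M m) = dia (\<alpha> x) (dia y m) - dia (\<alpha> y) (dia x m)) \<and>
     (\<forall>x y m. dia (dot x y) (\<alpha>M m) = bul (\<alpha> x) (dia y m) - dia (\<alpha> y) (bul x m)) \<and>
     (\<forall>x y m. bul (br x y) (\<alpha>M m) = bul (\<alpha> x) (bul y m) - bul (\<alpha> y) (bul x m)
                 - bul (dot x y) (\<alpha>M m) + bul (dot y x) (\<alpha>M m))"

end

theory Submission
  imports Defs
begin

lemma pow_lin:
  assumes "vector_space s" "Vector_Spaces.linear s s f"
  shows "Vector_Spaces.linear s s (f ^^ n)"
proof (induction n)
  case 0
  then show ?case using vector_space.linear_id[OF assms(1)] by (simp add: id_def)
next
  case (Suc n)
  have "Vector_Spaces.linear s s (f \<circ> (f ^^ n))"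
    by (rule Vector_Spaces.linear_compose[OF Suc assms(2)])
  then show ?case by (simp add: comp_def)
qed

lemma pow_comm: "(f ^^ n) (f x) = f ((f ^^ n) x)"
  by (metis comp_apply funpow_Suc_right funpow_swap1)

lemma pow_hom:
  assumes "\<And>x y. f (b x y) = b (f x) (f y)"
  shows "(f ^^ n) (b x y) = b ((f ^^ n) x) ((f ^^ n) y)"
  by (induction n) (simp_all add: assms)

theorem mainTheorem5:
  fixes s :: "'k::field \<Rightarrow> 'l::ab_group_add \<Rightarrow> 'l"
    and sM :: "'k \<Rightarrow> 'm::ab_group_add \<Rightarrow> 'm"
    and br dot :: "'l \<Rightarrow> 'l \<Rightarrow> 'l" and \<alpha> :: "'l \<Rightarrow> 'l"
    and dia bul :: "'l \<Rightarrow> 'm \<Rightarrow> 'm" and \<alpha>M :: "'m \<Rightarrow> 'm"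
    and n :: nat
  assumes "(2::'k) \<noteq> 0"
    and "MultHomPostLie s br dot \<alpha>"
    and "HomPostLieModule s br dot \<alpha> sM dia bul \<alpha>M"
  shows "HomPostLieModule s br dot \<alpha> sM
           (\<lambda>x m. dia ((\<alpha> ^^ n) x) m) (\<lambda>x m. bul ((\<alpha> ^^ n) x) m) \<alpha>M"
proof -
  have H: "HomLie s br \<alpha>" and M: "\<forall>x y. \<alpha> (br x y) = br (\<alpha> x) (\<alpha> y)"
    "\<forall>x y. \<alpha> (dot x y) = dot (\<alpha> x) (\<alpha> y)"
    using assms(2) unfolding MultHomPostLie_def HomPostLie_def by blast+
  have vs: "vector_space s" and la: "Vector_Spaces.linear s s \<alpha>"
    using H unfolding HomLie_def by blast+
  have hb: "\<And>x y. \<alpha> (br x y) = br (\<alpha> x) (\<alpha> y)" using M(1) by blast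
  have hd: "\<And>x y. \<alpha> (dot x y) = dot (\<alpha> x) (\<alpha> y)" using M(2) by blast
  have ln: "Vector_Spaces.linear s s (\<alpha> ^^ n)" by (rule pow_lin[OF vs la])
  have bil: "bilinear_map s sM sM (\<lambda>x m. g ((\<alpha> ^^ n) x) m)" if "bilinear_map s sM sM g" for g
  proof -
    have "Vector_Spaces.linear s sM ((\<lambda>x. g x m) \<circ> (\<alpha> ^^ n))" for m
    proof (rule Vector_Spaces.linear_compose[OF ln])
      show "Vector_Spaces.linear s sM (\<lambda>x. g x m)"
        using that unfolding bilinear_map_def by blast
    qed
    then have "Vector_Spaces.linear s sM (\<lambda>x. g ((\<alpha> ^^ n) x) m)" for m
      by (simp only: comp_def)
    moreover have "Vector_Spaces.linear sM sM (\<lambda>m. g ((\<alpha> ^^ n) x) m)" for x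
      using that unfolding bilinear_map_def by blast
    ultimately show ?thesis unfolding bilinear_map_def by blast
  qed
  have nb: "(\<alpha> ^^ n) (br x y) = br ((\<alpha> ^^ n) x) ((\<alpha> ^^ n) y)" for x y
    by (rule pow_hom[of \<alpha> br, OF hb])
  have nd: "(\<alpha> ^^ n) (dot x y) = dot ((\<alpha> ^^ n) x) ((\<alpha> ^^ n) y)" for x y
    by (rule pow_hom[of \<alpha> dot, OF hd])
  have X: "vector_space sM \<and> Vector_Spaces.linear sM sM \<alpha>M \<and>
     bilinear_map s sM sM dia \<and> bilinear_map s sM sM bul \<and>
     (\<forall>x m. \<alpha>M (dia x m) = dia (\<alpha> x) (\<alpha>M m)) \<and>
     (\<forall>x m. \<alpha>M (bul x m) = bul (\<alpha> x) (\<alpha>M m)) \<and>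
     (\<forall>x y m. dia (br x y) (\<alpha>M m) = dia (\<alpha> x) (dia y m) - dia (\<alpha> y) (dia x m)) \<and>
     (\<forall>x y m. dia (dot x y) (\<alpha>M m) = bul (\<alpha> x) (dia y m) - dia (\<alpha> y) (bul x m)) \<and>
     (\<forall>x y m. bul (br x y) (\<alpha>M m) = bul (\<alpha> x) (bul y m) - bul (\<alpha> y) (bul x m)
                 - bul (dot x y) (\<alpha>M m) + bul (dot y x) (\<alpha>M m))"
    using assms(3) unfolding HomPostLieModule_def .
  then obtain A: "vector_space sM" "Vector_Spaces.linear sM sM \<alpha>M"
       "bilinear_map s sM sM dia" "bilinear_map s sM sM bul"
    and B1: "\<forall>x m. \<alpha>M (dia x m) = dia (\<alpha> x) (\<alpha>M m)"
    and B2: "\<forall>x m. \<alpha>M (bul x m) = bul (\<alpha> x) (\<alpha>M m)"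
    and B3: "\<forall>x y m. dia (br x y) (\<alpha>M m) = dia (\<alpha> x) (dia y m) - dia (\<alpha> y) (dia x m)"
    and B4: "\<forall>x y m. dia (dot x y) (\<alpha>M m) = bul (\<alpha> x) (dia y m) - dia (\<alpha> y) (bul x m)"
    and B5: "\<forall>x y m. bul (br x y) (\<alpha>M m) = bul (\<alpha> x) (bul y m) - bul (\<alpha> y) (bul x m)
                 - bul (dot x y) (\<alpha>M m) + bul (dot y x) (\<alpha>M m)"
    by (elim conjE) (rule that)
  note A1 = spec[OF spec[OF B1]] and A2 = spec[OF spec[OF B2]]
  note A3 = spec[OF spec[OF spec[OF B3]]] and A4 = spec[OF spec[OF spec[OF B4]]]
  note A5 = spec[OF spec[OF spec[OF B5]]]
  show ?thesis
    unfolding HomPostLieModule_def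
  proof (intro conjI allI)
    fix x y m
    show "\<alpha>M (dia ((\<alpha> ^^ n) x) m) = dia ((\<alpha> ^^ n) (\<alpha> x)) (\<alpha>M m)"
      by (simp only: A1 pow_comm)
    show "\<alpha>M (bul ((\<alpha> ^^ n) x) m) = bul ((\<alpha> ^^ n) (\<alpha> x)) (\<alpha>M m)"
      by (simp only: A2 pow_comm)
    show "dia ((\<alpha> ^^ n) (br x y)) (\<alpha>M m) = dia ((\<alpha> ^^ n) (\<alpha> x)) (dia ((\<alpha> ^^ n) y) m) - dia ((\<alpha> ^^ n) (\<alpha> y)) (dia ((\<alpha> ^^ n) x) m)"
      by (simp only: A3 nb pow_comm)
    show "dia ((\<alpha> ^^ n) (dot x y)) (\<alpha>M m) = bul ((\<alpha> ^^ n) (\<alpha> x)) (dia ((\<alpha> ^^ n) y) m) - dia ((\<alpha> ^^ n) (\<alpha> y)) (bul ((\<alpha> ^^ n) x) m)"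
      by (simp only: A4 nd pow_comm)
    show "bul ((\<alpha> ^^ n) (br x y)) (\<alpha>M m) = bul ((\<alpha> ^^ n) (\<alpha> x)) (bul ((\<alpha> ^^ n) y) m) - bul ((\<alpha> ^^ n) (\<alpha> y)) (bul ((\<alpha> ^^ n) x) m) - bul ((\<alpha> ^^ n) (dot x y)) (\<alpha>M m) + bul ((\<alpha> ^^ n) (dot y x)) (\<alpha>M m)"
      by (simp only: A5 nb nd pow_comm)
  qed (use A bil in blast)+
qed

end
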